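(* Let $I\subset\mathbb R$ be a compact interval, $v\in C(I,\mathsf H_1)$, and let $(\alpha_n)$ be real-valued functions in $L^1_{\mathrm{loc}}(\mathbb R)$ with $\alpha_n\rightharpoonup1$ and $|\alpha_n|\le\bar\alpha$ a.e. for some $\bar\alpha\in L^1_{\mathrm{loc}}(\mathbb R)$. Then $$\lim_{n\to\infty}\sup_{t,t'\in I}\big\|\Phi^{A,\alpha_n}(t,t')v(t')-\Phi^A(t-t')v(t')\big\|_{\mathsf H_1}=0.$$
   Context: $\mathsf H_1$ is a complex Hilbert space, $A$ a self-adjoint operator in $\mathsf H_1$, and $\Phi^A(t)=e^{-itA}$ the strongly continuous unitary group it generates. For real-valued $\alpha\in L^1_{\mathrm{loc}}(\mathbb R)$, $\Phi^{A,\alpha}(t_1,t_0)=\Phi^A\big(\int_{t_0}^{t_1}\alpha(s)\,ds\big)$. Weak convergence in $L^1_{\mathrm{loc}}$: $\alpha_n\rightharpoonup\alpha$ means that for every compact interval $J\subset\mathbb R$ and every $\theta\in C(J)$, $\lim_{n\to\infty}\int_J\alpha_n\theta\,dt=\int_J\alpha\theta\,dt$. *)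

theory Defs
  imports "HOL-Analysis.Analysis"
begin

text \<open>A complex Hilbert space: a complex Banach space whose norm satisfies the
  parallelogram law (Jordan--von Neumann), so that it comes from a complex inner product.\<close>
class complex_hilbert = banach +
  fixes scaleC :: "complex \<Rightarrow> 'a \<Rightarrow> 'a"
  assumes scaleC_add_right: "scaleC c (x + y) = scaleC c x + scaleC c y"
    and scaleC_add_left: "scaleC (b + c) x = scaleC b x + scaleC c x"
    and scaleC_scaleC: "scaleC b (scaleC c x) = scaleC (b * c) x"
    and scaleC_one: "scaleC 1 x = x"
    and scaleR_scaleC: "scaleR r x = scaleC (complex_of_real r) x"
    and norm_scaleC: "norm (scaleC c x) = cmod c * norm x"
    and parallelogram: "(norm (x + y))\<^sup>2 + (norm (x - y))\<^sup>2 = 2 * ((norm x)\<^sup>2 + (norm y)\<^sup>2)"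

text \<open>Strongly continuous one-parameter group of unitary operators
  (by Stone's theorem exactly the groups t \<mapsto> exp(-itA), A self-adjoint).\<close>
definition sc_unitary_group :: "(real \<Rightarrow> 'a::complex_hilbert \<Rightarrow> 'a) \<Rightarrow> bool" where
  "sc_unitary_group U \<longleftrightarrow>
     U 0 = id \<and>
     (\<forall>s t. U (s + t) = U s \<circ> U t) \<and>
     (\<forall>t x y. U t (x + y) = U t x + U t y) \<and>
     (\<forall>t c x. U t (scaleC c x) = scaleC c (U t x)) \<and>
     (\<forall>t x. norm (U t x) = norm x) \<and>
     (\<forall>x. continuous_on UNIV (\<lambda>t. U t x))"

definition loc_integrable :: "(real \<Rightarrow> real) \<Rightarrow> bool" where
  "loc_integrable f \<longleftrightarrow> (\<forall>a b. set_integrable lborel {a..b} f)"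

definition weak_L1loc :: "(nat \<Rightarrow> real \<Rightarrow> real) \<Rightarrow> (real \<Rightarrow> real) \<Rightarrow> bool" where
  "weak_L1loc \<alpha>s \<alpha> \<longleftrightarrow>
     (\<forall>a b \<theta>. a \<le> b \<longrightarrow> continuous_on {a..b} \<theta> \<longrightarrow>
        (\<lambda>n. LBINT t:{a..b}. \<alpha>s n t * \<theta> t) \<longlonglongrightarrow> (LBINT t:{a..b}. \<alpha> t * \<theta> t))"

text \<open>\<Phi>^{A,\<alpha>}(t1,t0) = \<Phi>^A(\<integral>_{t0}^{t1} \<alpha>) (oriented integral).\<close>
definition reparam :: "(real \<Rightarrow> 'a \<Rightarrow> 'a) \<Rightarrow> (real \<Rightarrow> real) \<Rightarrow> real \<Rightarrow> real \<Rightarrow> 'a \<Rightarrow> 'a" where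
  "reparam U \<alpha> t1 t0 = U (LBINT s=t0..t1. \<alpha> s)"

end

theory Submission
  imports Defs "HOL-Probability.Probability_Mass_Function"
begin

lemma li_interval:
  assumes "loc_integrable f"
  shows "interval_lebesgue_integrable lborel (ereal x) (ereal y) f"
proof -
  have "set_integrable lborel {min x y..max x y} f" using assms by (simp add: loc_integrable_def)
  then have "set_integrable lborel {min x y<..<max x y} f"
    by (rule set_integrable_subset) auto
  then show ?thesis unfolding interval_lebesgue_integrable_def
    by (auto simp: min_def max_def split: if_splits)
qed

lemma li_interval3:
  assumes "loc_integrable f"
  shows "interval_lebesgue_integrable lborel (min (ereal x) (min (ereal y) (ereal z)))
           (max (ereal x) (max (ereal y) (ereal z))) f"
  using li_interval[OF assms, of "min x (min y z)" "max x (max y z)"] by simp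

lemma li_Icc_sub:
  assumes "loc_integrable f"
  shows "set_integrable lborel {x..y} f"
  using assms by (simp add: loc_integrable_def)

lemma interval_mono_bound:
  fixes f g :: "real \<Rightarrow> real"
  assumes "t \<le> s" "set_integrable lborel {t..s} f" "set_integrable lborel {t..s} g"
    "AE x in lborel. \<bar>f x\<bar> \<le> g x"
  shows "\<bar>LBINT x=t..s. f x\<bar> \<le> (LBINT x=t..s. g x)"
proof -
  have "\<bar>LBINT x:{t..s}. f x\<bar> \<le> (LBINT x:{t..s}. \<bar>f x\<bar>)"
    using set_integral_norm_bound[OF assms(2)] by simp
  also have "\<dots> \<le> (LBINT x:{t..s}. g x)"
    by (rule set_integral_mono_AE) (use assms set_integrable_abs in auto)
  finally show ?thesis using assms(1) by (simp add: interval_integral_Icc)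
qed

lemma unif_conv:
  fixes f :: "'b \<Rightarrow> 'c::metric_space \<Rightarrow> real"
  assumes "compact K" "\<forall>x\<in>K. ((\<lambda>n. f n x) \<longlongrightarrow> 0) F"
    "\<forall>e>0. \<exists>d>0. \<forall>n. \<forall>x\<in>K. \<forall>y\<in>K. dist x y < d \<longrightarrow> \<bar>f n x - f n y\<bar> < e"
  shows "\<forall>e>0. eventually (\<lambda>n. \<forall>x\<in>K. \<bar>f n x\<bar> < e) F"
proof (intro allI impI)
  fix e :: real assume e: "e > 0"
  then obtain d where d: "d > 0" "\<forall>n. \<forall>x\<in>K. \<forall>y\<in>K. dist x y < d \<longrightarrow> \<bar>f n x - f n y\<bar> < e/2"
    using assms(3) by (meson half_gt_zero)
  have Kc: "K \<subseteq> (\<Union>x\<in>K. ball x d)" using d(1) by auto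
  obtain C where C: "C \<subseteq> K" "finite C" "K \<subseteq> (\<Union>x\<in>C. ball x d)"
    using compactE_image[OF assms(1), of K "\<lambda>x. ball x d"] Kc open_ball by blast
  have "\<forall>x\<in>C. eventually (\<lambda>n. \<bar>f n x\<bar> < e/2) F"
  proof
    fix x assume "x \<in> C"
    then have "((\<lambda>n. f n x) \<longlongrightarrow> 0) F" using C assms(2) by auto
    then have "\<forall>\<epsilon>>0. eventually (\<lambda>n. \<bar>f n x\<bar> < \<epsilon>) F"
      by (simp add: tendsto_iff dist_real_def)
    then show "eventually (\<lambda>n. \<bar>f n x\<bar> < e/2) F"
      using e half_gt_zero by blast
  qed
  then have "eventually (\<lambda>n. \<forall>x\<in>C. \<bar>f n x\<bar> < e/2) F"
    by (rule eventually_ball_finite[OF C(2)])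
  then show "eventually (\<lambda>n. \<forall>x\<in>K. \<bar>f n x\<bar> < e) F"
  proof eventually_elim
    case (elim n)
    show ?case
    proof
      fix y assume y: "y \<in> K"
      then obtain x where x: "x \<in> C" "dist x y < d" using C(3) by auto
      then have "\<bar>f n x - f n y\<bar> < e/2" using d(2) C(1) y by auto
      moreover have "\<bar>f n x\<bar> < e/2" using elim x(1) by blast
      ultimately show "\<bar>f n y\<bar> < e" by linarith
    qed
  qed
qed

lemma li_mult_bounded:
  fixes f \<theta> :: "real \<Rightarrow> real"
  assumes "loc_integrable f" "continuous_on UNIV \<theta>" "\<And>x. \<bar>\<theta> x\<bar> \<le> 1"
  shows "loc_integrable (\<lambda>x. f x * \<theta> x)"
  unfolding loc_integrable_def
proof (intro allI)
  fix x y :: real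
  have fi: "set_integrable lborel {x..y} f" using assms(1) by (simp add: loc_integrable_def)
  then have "(\<lambda>z. indicator {x..y} z *\<^sub>R f z) \<in> borel_measurable lborel"
    unfolding set_integrable_def by (rule borel_measurable_integrable)
  moreover have "\<theta> \<in> borel_measurable lborel"
    using assms(2) by (simp add: borel_measurable_continuous_onI)
  ultimately have "(\<lambda>z. (indicator {x..y} z *\<^sub>R f z) * \<theta> z) \<in> borel_measurable lborel"
    by measurable
  then have "set_borel_measurable lborel {x..y} (\<lambda>z. f z * \<theta> z)"
    unfolding set_borel_measurable_def by (simp add: mult.assoc)
  moreover have "AE z in lborel. z \<in> {x..y} \<longrightarrow> norm (f z * \<theta> z) \<le> norm (f z)"
    using assms(3) by (auto simp: abs_mult intro!: mult_left_le)
  ultimately show "set_integrable lborel {x..y} (\<lambda>z. f z * \<theta> z)"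
    by (rule set_integrable_bound[OF fi])
qed

lemma cutoff_bound:
  fixes f g :: "real \<Rightarrow> real" and a t c \<eta> :: real
  assumes f: "loc_integrable f" and g: "loc_integrable g"
    and fg: "AE x in lborel. \<bar>f x\<bar> \<le> g x"
    and at: "a \<le> t" and eta: "0 < \<eta>" and tc: "t + \<eta> \<le> c"
  shows "\<bar>(LBINT x=a..c. f x * max 0 (min 1 ((t + \<eta> - x)/\<eta>))) - (LBINT x=a..t. f x)\<bar>
          \<le> (LBINT x=t..t+\<eta>. g x)"
proof -
  define \<theta> where "\<theta> = (\<lambda>x::real. max 0 (min 1 ((t + \<eta> - x)/\<eta>)))"
  have thc: "continuous_on UNIV \<theta>" unfolding \<theta>_def by (intro continuous_intros) (use eta in auto)
  have thb: "\<bar>\<theta> x\<bar> \<le> 1" for x unfolding \<theta>_def by auto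
  have fth: "loc_integrable (\<lambda>x. f x * \<theta> x)" by (rule li_mult_bounded[OF f thc thb])
  have "(LBINT x=a..c. f x * \<theta> x) = (LBINT x=a..t. f x * \<theta> x) + (LBINT x=t..c. f x * \<theta> x)"
    by (rule interval_integral_sum[symmetric]) (rule li_interval3[OF fth])
  also have "(LBINT x=t..c. f x * \<theta> x) = (LBINT x=t..t+\<eta>. f x * \<theta> x) + (LBINT x=t+\<eta>..c. f x * \<theta> x)"
    by (rule interval_integral_sum[symmetric]) (rule li_interval3[OF fth])
  also have "(LBINT x=a..t. f x * \<theta> x) = (LBINT x=a..t. f x)"
  proof (rule interval_integral_cong)
    fix x assume "x \<in> einterval (min (ereal a) (ereal t)) (max (ereal a) (ereal t))"
    then have "x < t" using at by (auto simp: einterval_iff min_def max_def split: if_splits)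
    then have "(t + \<eta> - x)/\<eta> \<ge> 1" using eta by (simp add: field_simps)
    then show "f x * \<theta> x = f x" unfolding \<theta>_def by simp
  qed
  also have "(LBINT x=t+\<eta>..c. f x * \<theta> x) = (LBINT x=t+\<eta>..c. 0)"
  proof (rule interval_integral_cong)
    fix x assume "x \<in> einterval (min (ereal (t+\<eta>)) (ereal c)) (max (ereal (t+\<eta>)) (ereal c))"
    then have "x > t + \<eta>" using tc by (auto simp: einterval_iff min_def max_def split: if_splits)
    then have "(t + \<eta> - x)/\<eta> \<le> 0" using eta by (simp add: divide_nonpos_pos)
    then show "f x * \<theta> x = 0" unfolding \<theta>_def by simp
  qed
  finally have eq: "(LBINT x=a..c. f x * \<theta> x) - (LBINT x=a..t. f x) = (LBINT x=t..t+\<eta>. f x * \<theta> x)"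
    by simp
  have "\<bar>LBINT x=t..t+\<eta>. f x * \<theta> x\<bar> \<le> (LBINT x=t..t+\<eta>. g x)"
  proof (rule interval_mono_bound)
    show "AE x in lborel. \<bar>f x * \<theta> x\<bar> \<le> g x"
      using fg by eventually_elim (use thb in \<open>auto simp: abs_mult intro: order_trans[OF mult_left_le]\<close>)
  qed (use eta fth g in \<open>auto simp: loc_integrable_def\<close>)
  then show ?thesis using eq unfolding \<theta>_def by simp
qed

lemma li_const: "loc_integrable (\<lambda>_. c)"
  unfolding loc_integrable_def by (auto intro!: borel_integrable_atLeastAtMost')

lemma pointwise_conv:
  fixes \<alpha>s :: "nat \<Rightarrow> real \<Rightarrow> real" and a b t :: real
  assumes li: "\<And>n. loc_integrable (\<alpha>s n)"
    and weak: "weak_L1loc \<alpha>s (\<lambda>_. 1)"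
    and lib: "loc_integrable \<alpha>bar"
    and dom: "\<And>n. AE t in lborel. \<bar>\<alpha>s n t\<bar> \<le> \<alpha>bar t"
    and at: "a \<le> t" and tb: "t \<le> b"
  shows "(\<lambda>n. LBINT s=a..t. \<alpha>s n s) \<longlonglongrightarrow> t - a"
  unfolding tendsto_iff
proof (intro allI impI)
  fix \<epsilon> :: real assume e: "\<epsilon> > 0"
  define H where "H = (\<lambda>x. LBINT s:{t..x}. \<alpha>bar s)"
  have "continuous_on UNIV H" unfolding H_def
    by (rule continuous_on_LBINT) (use lib in \<open>simp add: loc_integrable_def\<close>)
  then have "isCont H t" by (simp add: continuous_on_eq_continuous_at)
  then obtain d where d: "d > 0" "\<And>y. dist y t < d \<Longrightarrow> dist (H y) (H t) < \<epsilon>/3"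
    unfolding continuous_at_eps_delta using e by (meson divide_pos_pos zero_less_numeral)
  define \<eta> where "\<eta> = min (d/2) (min (\<epsilon>/4) 1)"
  have eta: "\<eta> > 0" "\<eta> < d" "\<eta> \<le> \<epsilon>/4" "\<eta> \<le> 1" using d e unfolding \<eta>_def by auto
  define c where "c = b + 1"
  have ac: "a \<le> c" and tc: "t + \<eta> \<le> c" using at tb eta unfolding c_def by auto
  define \<theta> where "\<theta> = (\<lambda>x::real. max 0 (min 1 ((t + \<eta> - x)/\<eta>)))"
  have thc: "continuous_on {a..c} \<theta>" unfolding \<theta>_def by (intro continuous_intros) (use eta in auto)
  have "(\<lambda>n. LBINT s:{a..c}. \<alpha>s n s * \<theta> s) \<longlonglongrightarrow> (LBINT s:{a..c}. 1 * \<theta> s)"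
    using weak ac thc unfolding weak_L1loc_def by blast
  then have conv: "(\<lambda>n. LBINT s=a..c. \<alpha>s n s * \<theta> s) \<longlonglongrightarrow> (LBINT s=a..c. 1 * \<theta> s)"
    using ac by (simp add: interval_integral_Icc)
  have Ht: "H t = 0" unfolding H_def
    using interval_integral_Icc[of t t \<alpha>bar] by simp
  have Hte: "(LBINT s=t..t+\<eta>. \<alpha>bar s) = H (t+\<eta>)"
    unfolding H_def using eta by (simp add: interval_integral_Icc)
  have "\<bar>H (t+\<eta>)\<bar> < \<epsilon>/3" using d(2)[of "t+\<eta>"] eta Ht by (simp add: dist_real_def)
  then have b1: "\<bar>(LBINT s=a..c. \<alpha>s n s * \<theta> s) - (LBINT s=a..t. \<alpha>s n s)\<bar> < \<epsilon>/3" for n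
    using cutoff_bound[OF li lib dom at eta(1) tc, of n] Hte unfolding \<theta>_def by linarith
  have b2: "\<bar>(LBINT s=a..c. 1 * \<theta> s) - (t - a)\<bar> \<le> \<epsilon>/4"
    using cutoff_bound[of "\<lambda>_. 1" "\<lambda>_. 1" a t \<eta> c, OF li_const li_const _ at eta(1) tc] eta at unfolding \<theta>_def by simp
  have "eventually (\<lambda>n. dist (LBINT s=a..c. \<alpha>s n s * \<theta> s) (LBINT s=a..c. 1 * \<theta> s) < \<epsilon>/3) sequentially"
    by (rule tendstoD[OF conv]) (use e in simp)
  then show "eventually (\<lambda>n. dist (LBINT s=a..t. \<alpha>s n s) (t - a) < \<epsilon>) sequentially"
  proof eventually_elim
    case (elim n)
    then show ?case using b1[of n] b2 unfolding dist_real_def by simp (smt (verit))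
  qed
qed

lemma incr_bound:
  fixes f g :: "real \<Rightarrow> real" and a t s :: real
  assumes f: "loc_integrable f" and g: "loc_integrable g"
    and fg: "AE x in lborel. \<bar>f x\<bar> \<le> g x" and ts: "t \<le> s"
  shows "\<bar>(LBINT x=a..s. f x) - (LBINT x=a..t. f x)\<bar> \<le> (LBINT x=a..s. g x) - (LBINT x=a..t. g x)"
proof -
  have 1: "(LBINT x=a..t. f x) + (LBINT x=t..s. f x) = (LBINT x=a..s. f x)"
    by (rule interval_integral_sum) (rule li_interval3[OF f])
  have 2: "(LBINT x=a..t. g x) + (LBINT x=t..s. g x) = (LBINT x=a..s. g x)"
    by (rule interval_integral_sum) (rule li_interval3[OF g])
  have "\<bar>LBINT x=t..s. f x\<bar> \<le> (LBINT x=t..s. g x)"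
    by (rule interval_mono_bound[OF ts _ _ fg]) (use f g in \<open>auto simp: loc_integrable_def\<close>)
  then show ?thesis using 1 2 by linarith
qed

lemma U_diff:
  assumes "sc_unitary_group U"
  shows "U t (x - y) = U t x - U t y"
proof -
  have "U t ((x - y) + y) = U t (x - y) + U t y"
    using assms unfolding sc_unitary_group_def by blast
  then show ?thesis by (simp add: algebra_simps)
qed

lemma U_key:
  assumes U: "sc_unitary_group U"
  shows "norm (U x w - U y w) = norm (U (x - y) w - w)"
proof -
  have "U (y + (x - y)) = U y \<circ> U (x - y)" using U unfolding sc_unitary_group_def by blast
  then have "U x w = U y (U (x - y) w)" by simp
  then have "U x w - U y w = U y (U (x - y) w - w)" using U_diff[OF U] by simp
  then show ?thesis using U unfolding sc_unitary_group_def by simp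
qed

theorem corollary2p5:
  fixes U :: "real \<Rightarrow> 'a::complex_hilbert \<Rightarrow> 'a"
    and v :: "real \<Rightarrow> 'a"
    and \<alpha>s :: "nat \<Rightarrow> real \<Rightarrow> real"
    and \<alpha>bar :: "real \<Rightarrow> real"
    and a b :: real
  assumes "sc_unitary_group U"
    and "a \<le> b"
    and "continuous_on {a..b} v"
    and "\<And>n. loc_integrable (\<alpha>s n)"
    and "weak_L1loc \<alpha>s (\<lambda>_. 1)"
    and "loc_integrable \<alpha>bar"
    and "\<And>n. AE t in lborel. \<bar>\<alpha>s n t\<bar> \<le> \<alpha>bar t"
  shows "(\<lambda>n. SUP p\<in>{a..b} \<times> {a..b}.
            norm (reparam U (\<alpha>s n) (fst p) (snd p) (v (snd p)) - U (fst p - snd p) (v (snd p))))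
         \<longlonglongrightarrow> 0"
proof -
  note U = assms(1) and ab = assms(2) and vc = assms(3) and li = assms(4) and weak = assms(5)
    and lib = assms(6) and dom = assms(7)
  define K where "K = {a..b}"
  define G where "G = (\<lambda>n (t::real). LBINT s=a..t. \<alpha>s n s)"
  define f where "f = (\<lambda>n t. G n t - (t - a))"
  define H where "H = (\<lambda>x::real. LBINT s=a..x. \<alpha>bar s)"
  define \<phi> where "\<phi> = (\<lambda>\<delta> s. norm (U \<delta> (v s) - v s))"
  have "continuous_on UNIV (\<lambda>x. LBINT s:{a..x}. \<alpha>bar s)"
    by (rule continuous_on_LBINT) (use lib in \<open>simp add: loc_integrable_def\<close>)
  then have "continuous_on K (\<lambda>x. LBINT s:{a..x}. \<alpha>bar s)"
    by (rule continuous_on_subset) simp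
  then have "continuous_on K H"
    by (rule continuous_on_eq) (auto simp: K_def H_def interval_integral_Icc)
  then have Huc: "uniformly_continuous_on K H"
    by (rule compact_uniformly_continuous) (simp add: K_def)
  have vuc: "uniformly_continuous_on K v"
    using vc by (intro compact_uniformly_continuous) (auto simp: K_def)
  have Gbound: "\<bar>G n s - G n t\<bar> \<le> \<bar>H s - H t\<bar>" for n and s t :: real
  proof (cases "t \<le> s")
    case True
    then show ?thesis using incr_bound[of "\<alpha>s n" \<alpha>bar t s a, OF li lib dom True] unfolding G_def H_def by simp
  next
    case False
    then have st: "s \<le> t" by simp
    show ?thesis using incr_bound[of "\<alpha>s n" \<alpha>bar s t a, OF li lib dom st] unfolding G_def H_def by simp
  qed
  have funif: "\<forall>e>0. eventually (\<lambda>n. \<forall>x\<in>K. \<bar>f n x\<bar> < e) sequentially"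
  proof (rule unif_conv)
    show "compact K" by (simp add: K_def)
    show "\<forall>x\<in>K. ((\<lambda>n. f n x) \<longlongrightarrow> 0) sequentially"
    proof
      fix x assume "x \<in> K"
      then have "(\<lambda>n. G n x) \<longlonglongrightarrow> x - a" unfolding G_def K_def
        using pointwise_conv[OF li weak lib dom] by auto
      then have "(\<lambda>n. G n x - (x - a)) \<longlonglongrightarrow> (x - a) - (x - a)"
        by (intro tendsto_intros)
      then show "((\<lambda>n. f n x) \<longlongrightarrow> 0) sequentially" unfolding f_def by simp
    qed
    show "\<forall>e>0. \<exists>d>0. \<forall>n. \<forall>x\<in>K. \<forall>y\<in>K. dist x y < d \<longrightarrow> \<bar>f n x - f n y\<bar> < e"
    proof (intro allI impI)
      fix e :: real assume e: "e > 0"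
      then obtain d1 where d1: "d1 > 0" "\<forall>x\<in>K. \<forall>y\<in>K. dist y x < d1 \<longrightarrow> dist (H y) (H x) < e/2"
        using Huc unfolding uniformly_continuous_on_def by (meson half_gt_zero)
      show "\<exists>d>0. \<forall>n. \<forall>x\<in>K. \<forall>y\<in>K. dist x y < d \<longrightarrow> \<bar>f n x - f n y\<bar> < e"
      proof (intro exI[of _ "min d1 (e/2)"] conjI allI ballI impI)
        show "min d1 (e/2) > 0" using d1 e by simp
        fix n x y assume xy: "x \<in> K" "y \<in> K" "dist x y < min d1 (e/2)"
        then have "\<bar>H x - H y\<bar> < e/2" using d1(2) by (auto simp: dist_real_def)
        moreover have "\<bar>x - y\<bar> < e/2" using xy by (simp add: dist_real_def)
        moreover note Gbound[of n x y]
        ultimately show "\<bar>f n x - f n y\<bar> < e" unfolding f_def by linarith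
      qed
    qed
  qed
  have phiunif: "\<forall>e>0. eventually (\<lambda>\<delta>. \<forall>x\<in>K. \<bar>\<phi> \<delta> x\<bar> < e) (at 0)"
  proof (rule unif_conv)
    show "compact K" by (simp add: K_def)
    show "\<forall>x\<in>K. ((\<lambda>\<delta>. \<phi> \<delta> x) \<longlongrightarrow> 0) (at 0)"
    proof
      fix x assume "x \<in> K"
      have "continuous_on UNIV (\<lambda>t. U t (v x))" using U unfolding sc_unitary_group_def by blast
      then have "isCont (\<lambda>t. U t (v x)) 0" by (simp add: continuous_on_eq_continuous_at)
      then have "((\<lambda>t. U t (v x)) \<longlongrightarrow> U 0 (v x)) (at 0)" by (simp add: isCont_def)
      then have "((\<lambda>t. norm (U t (v x) - v x)) \<longlongrightarrow> norm (U 0 (v x) - v x)) (at 0)"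
        by (intro tendsto_intros)
      then show "((\<lambda>\<delta>. \<phi> \<delta> x) \<longlongrightarrow> 0) (at 0)"
        using U unfolding \<phi>_def sc_unitary_group_def by simp
    qed
    show "\<forall>e>0. \<exists>d>0. \<forall>n. \<forall>x\<in>K. \<forall>y\<in>K. dist x y < d \<longrightarrow> \<bar>\<phi> n x - \<phi> n y\<bar> < e"
    proof (intro allI impI)
      fix e :: real assume e: "e > 0"
      then obtain d where d: "d > 0" "\<forall>x\<in>K. \<forall>y\<in>K. dist y x < d \<longrightarrow> dist (v y) (v x) < e/2"
        using vuc unfolding uniformly_continuous_on_def by (meson half_gt_zero)
      show "\<exists>d>0. \<forall>n. \<forall>x\<in>K. \<forall>y\<in>K. dist x y < d \<longrightarrow> \<bar>\<phi> n x - \<phi> n y\<bar> < e"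
      proof (intro exI[of _ d] conjI allI ballI impI)
        show "d > 0" by fact
        fix n x y assume xy: "x \<in> K" "y \<in> K" "dist x y < d"
        then have vv: "norm (v x - v y) < e/2" using d(2) by (auto simp: dist_norm)
        have "norm (U n (v x) - U n (v y)) = norm (v x - v y)"
          using U_diff[OF U, of n "v x" "v y"] U unfolding sc_unitary_group_def by metis
        moreover have "\<bar>\<phi> n x - \<phi> n y\<bar> \<le> norm ((U n (v x) - v x) - (U n (v y) - v y))"
          unfolding \<phi>_def by (rule norm_triangle_ineq3)
        moreover have "norm ((U n (v x) - v x) - (U n (v y) - v y)) \<le> norm (U n (v x) - U n (v y)) + norm (v x - v y)"
          by (rule order_trans[OF _ norm_triangle_ineq4]) (simp add: algebra_simps)
        ultimately show "\<bar>\<phi> n x - \<phi> n y\<bar> < e" using vv by linarith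
      qed
    qed
  qed
  show ?thesis
    unfolding tendsto_iff
  proof (intro allI impI)
    fix \<epsilon> :: real assume e: "\<epsilon> > 0"
    then have "eventually (\<lambda>\<delta>. \<forall>x\<in>K. \<bar>\<phi> \<delta> x\<bar> < \<epsilon>/2) (at 0)" using phiunif e half_gt_zero by blast
    then obtain d where d: "d > 0" "\<And>\<delta>. \<delta> \<noteq> 0 \<Longrightarrow> dist \<delta> 0 < d \<Longrightarrow> \<forall>x\<in>K. \<bar>\<phi> \<delta> x\<bar> < \<epsilon>/2"
      unfolding eventually_at by auto
    have phis: "\<phi> \<delta> x < \<epsilon>/2" if "\<bar>\<delta>\<bar> < d" "x \<in> K" for \<delta> x
    proof (cases "\<delta> = 0")
      case True
      then show ?thesis using U e unfolding \<phi>_def sc_unitary_group_def by simp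
    next
      case False
      then show ?thesis using d(2)[of \<delta>] that by (auto simp: dist_real_def)
    qed
    have "eventually (\<lambda>n. \<forall>x\<in>K. \<bar>f n x\<bar> < d/2) sequentially" using funif d(1) half_gt_zero by blast
    then show "eventually (\<lambda>n. dist (SUP p\<in>{a..b} \<times> {a..b}.
            norm (reparam U (\<alpha>s n) (fst p) (snd p) (v (snd p)) - U (fst p - snd p) (v (snd p)))) 0 < \<epsilon>) sequentially"
    proof eventually_elim
      case (elim n)
      have pt: "norm (reparam U (\<alpha>s n) (fst p) (snd p) (v (snd p)) - U (fst p - snd p) (v (snd p))) < \<epsilon>/2"
        if p: "p \<in> {a..b} \<times> {a..b}" for p
      proof -
        obtain t t' where tt: "p = (t, t')" by (cases p)
        have tK: "t \<in> K" "t' \<in> K" using p tt by (auto simp: K_def)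
        have sum: "(LBINT s=a..t'. \<alpha>s n s) + (LBINT s=t'..t. \<alpha>s n s) = (LBINT s=a..t. \<alpha>s n s)"
          by (rule interval_integral_sum) (rule li_interval3[OF li])
        have X: "(LBINT s=t'..t. \<alpha>s n s) - (t - t') = f n t - f n t'"
          using sum unfolding f_def G_def by simp
        have "norm (reparam U (\<alpha>s n) t t' (v t') - U (t - t') (v t'))
              = \<phi> ((LBINT s=t'..t. \<alpha>s n s) - (t - t')) t'"
          unfolding reparam_def \<phi>_def by (rule U_key[OF U])
        also have "\<dots> < \<epsilon>/2"
        proof (rule phis[OF _ tK(2)])
          have "\<bar>f n t\<bar> < d/2" "\<bar>f n t'\<bar> < d/2" using elim tK by auto
          then show "\<bar>(LBINT s=t'..t. \<alpha>s n s) - (t - t')\<bar> < d" unfolding X by linarith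
        qed
        finally show ?thesis using tt by simp
      qed
      let ?S = "(\<lambda>p. norm (reparam U (\<alpha>s n) (fst p) (snd p) (v (snd p)) - U (fst p - snd p) (v (snd p)))) ` ({a..b} \<times> {a..b})"
      have ne: "{a..b} \<times> {a..b} \<noteq> {}" using ab by auto
      have up: "Sup ?S \<le> \<epsilon>/2"
        using pt ne by (intro cSUP_least) (auto intro: less_imp_le)
      have bdd: "bdd_above ?S" using pt by (intro bdd_aboveI2[of _ _ "\<epsilon>/2"]) (auto intro: less_imp_le)
      have "(a, a) \<in> {a..b} \<times> {a..b}" using ab by auto
      then have lo: "0 \<le> Sup ?S"
        using cSUP_upper[OF _ bdd] by (meson norm_ge_zero order_trans)
      show ?case using up lo e by (simp add: dist_real_def)
    qed
  qed
qed

end
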